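(* Let $K\geqslant1$ and $f\in\mathrm{HQR}_K(\mathbb{U},\mathbb{S})$ with $f(0)=0$. Then $$|f(z)|\leqslant\frac{4}{\pi}K\operatorname{artanh}|z|\quad\text{for all } z\in\mathbb{U},$$ and this inequality is sharp for each point $z\in\mathbb{U}$ (for every $z\in\mathbb{U}$ there is $g\in\mathrm{HQR}_K(\mathbb{U},\mathbb{S})$ with $g(0)=0$ and $|g(z)|=\frac{4}{\pi}K\operatorname{artanh}|z|$).
   Context: $\mathbb{U}=\{z\in\mathbb{C}:|z|<1\}$, $\mathbb{S}=\{z\in\mathbb{C}:-1<\operatorname{Re} z<1\}$. For domains $D,G\subset\mathbb{C}$, $\mathrm{HQR}_K(D,G)$ denotes the class of complex-valued harmonic $C^1$ maps $f:D\to G$ that are sense-preserving $K$-quasiregular, i.e. $|f_z(z)|>|f_{\bar z}(z)|$ and $\frac{|f_z(z)|+|f_{\bar z}(z)|}{|f_z(z)|-|f_{\bar z}(z)|}\leqslant K$ for all $z\in D$. *)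

theory Defs
  imports "HOL-Analysis.Analysis"
begin

definition dx :: "(complex \<Rightarrow> complex) \<Rightarrow> complex \<Rightarrow> complex" where
  "dx f z = frechet_derivative f (at z) 1"

definition dy :: "(complex \<Rightarrow> complex) \<Rightarrow> complex \<Rightarrow> complex" where
  "dy f z = frechet_derivative f (at z) \<i>"

definition dz :: "(complex \<Rightarrow> complex) \<Rightarrow> complex \<Rightarrow> complex" where
  "dz f z = (dx f z - \<i> * dy f z) / 2"

definition dzbar :: "(complex \<Rightarrow> complex) \<Rightarrow> complex \<Rightarrow> complex" where
  "dzbar f z = (dx f z + \<i> * dy f z) / 2"

definition harmonic_on :: "complex set \<Rightarrow> (complex \<Rightarrow> complex) \<Rightarrow> bool" where
  "harmonic_on D f \<longleftrightarrow>
     open D \<and>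
     (\<forall>z\<in>D. f differentiable (at z)) \<and>
     (\<forall>z\<in>D. dx f differentiable (at z) \<and> dy f differentiable (at z)) \<and>
     continuous_on D (dx (dx f)) \<and> continuous_on D (dy (dx f)) \<and>
     continuous_on D (dx (dy f)) \<and> continuous_on D (dy (dy f)) \<and>
     (\<forall>z\<in>D. dx (dx f) z + dy (dy f) z = 0)"

text \<open>HQR_K(D,G): harmonic C^1 maps D -> G that are sense-preserving
  K-quasiregular.\<close>
definition HQR :: "real \<Rightarrow> complex set \<Rightarrow> complex set \<Rightarrow> (complex \<Rightarrow> complex) set" where
  "HQR K D G = {f. harmonic_on D f \<and>
      continuous_on D (dx f) \<and> continuous_on D (dy f) \<and>
      f ` D \<subseteq> G \<and>
      (\<forall>z\<in>D. norm (dz f z) > norm (dzbar f z) \<and>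
         (norm (dz f z) + norm (dzbar f z)) / (norm (dz f z) - norm (dzbar f z)) \<le> K)}"

definition unit_disc :: "complex set" where
  "unit_disc = ball 0 1"

definition strip_S :: "complex set" where
  "strip_S = {z. -1 < Re z \<and> Re z < 1}"

end

theory Submission
  imports Defs "HOL-Complex_Analysis.Complex_Analysis"
begin


lemma lin_decomp:
  fixes L :: "complex \<Rightarrow> 'b::real_normed_vector"
  assumes "linear L"
  shows "L h = Re h *\<^sub>R L 1 + Im h *\<^sub>R L \<i>"
proof -
  have "h = Re h *\<^sub>R 1 + Im h *\<^sub>R \<i>" by (simp add: complex_eq_iff)
  then have "L h = L (Re h *\<^sub>R 1 + Im h *\<^sub>R \<i>)" by simp
  also have "\<dots> = Re h *\<^sub>R L 1 + Im h *\<^sub>R L \<i>"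
    using assms by (simp add: linear_add linear_scale)
  finally show ?thesis .
qed

lemma line_deriv:
  fixes \<phi> :: "complex \<Rightarrow> real"
  assumes "(\<phi> has_derivative L) (at (w + of_real s * v))"
  shows "((\<lambda>t. \<phi> (w + of_real t * v)) has_real_derivative L v) (at s)"
proof -
  have lin: "linear L" using assms has_derivative_linear by blast
  have g: "((\<lambda>t. w + of_real t * v) has_derivative (\<lambda>t. of_real t * v)) (at s)"
    by (auto intro!: derivative_eq_intros)
  have "((\<phi> \<circ> (\<lambda>t. w + of_real t * v)) has_derivative (L \<circ> (\<lambda>t. of_real t * v))) (at s)"
    by (rule diff_chain_at[OF g assms])
  moreover have "(L \<circ> (\<lambda>t. of_real t * v)) = (\<lambda>t. t * L v)"
  proof
    fix t show "(L \<circ> (\<lambda>t. of_real t * v)) t = t * L v"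
      using linear_scale[OF lin, of t v] by (simp add: scaleR_conv_of_real)
  qed
  ultimately show ?thesis
    by (simp add: has_field_derivative_def o_def mult.commute[of _ "L v"])
qed

lemma clairaut_step:
  fixes \<phi> :: "complex \<Rightarrow> real"
  assumes h: "0 < h" and sub: "\<And>a b. \<bar>a\<bar> \<le> h \<Longrightarrow> \<bar>b\<bar> \<le> h \<Longrightarrow> z0 + of_real a + of_real b * \<i> \<in> D"
   and d: "\<And>z. z\<in>D \<Longrightarrow> (\<phi> has_derivative \<Phi> z) (at z)"
   and dA: "\<And>z. z\<in>D \<Longrightarrow> ((\<lambda>w. \<Phi> w 1) has_derivative A z) (at z)"
   and dB: "\<And>z. z\<in>D \<Longrightarrow> ((\<lambda>w. \<Phi> w \<i>) has_derivative B z) (at z)"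
  shows "\<exists>a b c e. \<bar>a\<bar> \<le> h \<and> \<bar>b\<bar> \<le> h \<and> \<bar>c\<bar> \<le> h \<and> \<bar>e\<bar> \<le> h \<and>
     A (z0 + of_real a + of_real b * \<i>) \<i> = B (z0 + of_real c + of_real e * \<i>) 1"
proof -
  define \<Delta> where "\<Delta> = \<phi> (z0 + of_real h + of_real h * \<i>) - \<phi> (z0 + of_real h) - \<phi> (z0 + of_real h * \<i>) + \<phi> z0"
  define g where "g s = \<phi> ((z0 + of_real h * \<i>) + of_real s * 1) - \<phi> (z0 + of_real s * 1)" for s
  have gd: "DERIV g s :> \<Phi> (z0 + of_real s + of_real h * \<i>) 1 - \<Phi> (z0 + of_real s) 1" if "0 \<le> s" "s \<le> h" for s
  proof -
    have m1: "z0 + of_real h * \<i> + of_real s * 1 \<in> D" using sub[of s h] that h by (simp add: add_ac)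
    have m2: "z0 + of_real s * 1 \<in> D" using sub[of s 0] that h by simp
    show ?thesis unfolding g_def
      using DERIV_diff[OF line_deriv[OF d[OF m1]] line_deriv[OF d[OF m2]]] by (simp add: add_ac)
  qed
  obtain \<xi> where \<xi>: "0 < \<xi>" "\<xi> < h" "g h - g 0 = (h - 0) * (\<Phi> (z0 + of_real \<xi> + of_real h * \<i>) 1 - \<Phi> (z0 + of_real \<xi>) 1)"
    using MVT2[OF h, of g "\<lambda>s. \<Phi> (z0 + of_real s + of_real h * \<i>) 1 - \<Phi> (z0 + of_real s) 1"] gd by auto
  define q where "q t = \<Phi> ((z0 + of_real \<xi>) + of_real t * \<i>) 1" for t
  have qd: "DERIV q t :> A (z0 + of_real \<xi> + of_real t * \<i>) \<i>" if "0 \<le> t" "t \<le> h" for t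
  proof -
    have m1: "z0 + of_real \<xi> + of_real t * \<i> \<in> D" using sub[of \<xi> t] that \<xi> by simp
    show ?thesis unfolding q_def
      using line_deriv[OF dA[OF m1]] by simp
  qed
  obtain \<eta> where \<eta>: "0 < \<eta>" "\<eta> < h" "q h - q 0 = (h - 0) * A (z0 + of_real \<xi> + of_real \<eta> * \<i>) \<i>"
    using MVT2[OF h, of q "\<lambda>t. A (z0 + of_real \<xi> + of_real t * \<i>) \<i>"] qd by auto
  have e1: "\<Delta> = h * h * A (z0 + of_real \<xi> + of_real \<eta> * \<i>) \<i>"
  proof -
    have "\<Delta> = g h - g 0" unfolding \<Delta>_def g_def by (simp add: add_ac)
    also have "\<dots> = h * (q h - q 0)" using \<xi>(3) unfolding q_def by simp
    also have "\<dots> = h * h * A (z0 + of_real \<xi> + of_real \<eta> * \<i>) \<i>" using \<eta>(3) by simp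
    finally show ?thesis .
  qed
  define g2 where "g2 t = \<phi> ((z0 + of_real h) + of_real t * \<i>) - \<phi> (z0 + of_real t * \<i>)" for t
  have g2d: "DERIV g2 t :> \<Phi> (z0 + of_real h + of_real t * \<i>) \<i> - \<Phi> (z0 + of_real t * \<i>) \<i>" if "0 \<le> t" "t \<le> h" for t
  proof -
    have m1: "z0 + of_real h + of_real t * \<i> \<in> D" using sub[of h t] that h by (simp add: add_ac)
    have m2: "z0 + of_real t * \<i> \<in> D" using sub[of 0 t] that h by simp
    show ?thesis unfolding g2_def
      using DERIV_diff[OF line_deriv[OF d[OF m1]] line_deriv[OF d[OF m2]]] by (simp add: add_ac)
  qed
  obtain \<eta>' where \<eta>': "0 < \<eta>'" "\<eta>' < h" "g2 h - g2 0 = (h - 0) * (\<Phi> (z0 + of_real h + of_real \<eta>' * \<i>) \<i> - \<Phi> (z0 + of_real \<eta>' * \<i>) \<i>)"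
    using MVT2[OF h, of g2 "\<lambda>t. \<Phi> (z0 + of_real h + of_real t * \<i>) \<i> - \<Phi> (z0 + of_real t * \<i>) \<i>"] g2d by auto
  define q2 where "q2 s = \<Phi> ((z0 + of_real \<eta>' * \<i>) + of_real s * 1) \<i>" for s
  have q2d: "DERIV q2 s :> B (z0 + of_real s + of_real \<eta>' * \<i>) 1" if "0 \<le> s" "s \<le> h" for s
  proof -
    have m1: "z0 + of_real \<eta>' * \<i> + of_real s * 1 \<in> D" using sub[of s \<eta>'] that \<eta>' by (simp add: add_ac)
    show ?thesis unfolding q2_def
      using line_deriv[OF dB[OF m1]] by (simp add: add_ac)
  qed
  obtain \<xi>' where \<xi>': "0 < \<xi>'" "\<xi>' < h" "q2 h - q2 0 = (h - 0) * B (z0 + of_real \<xi>' + of_real \<eta>' * \<i>) 1"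
    using MVT2[OF h, of q2 "\<lambda>s. B (z0 + of_real s + of_real \<eta>' * \<i>) 1"] q2d by auto
  have e2: "\<Delta> = h * h * B (z0 + of_real \<xi>' + of_real \<eta>' * \<i>) 1"
  proof -
    have "\<Delta> = g2 h - g2 0" unfolding \<Delta>_def g2_def by (simp add: add_ac)
    also have "\<dots> = h * (q2 h - q2 0)" using \<eta>'(3) unfolding q2_def by (simp add: add_ac)
    also have "\<dots> = h * h * B (z0 + of_real \<xi>' + of_real \<eta>' * \<i>) 1" using \<xi>'(3) by simp
    finally show ?thesis .
  qed
  have "A (z0 + of_real \<xi> + of_real \<eta> * \<i>) \<i> = B (z0 + of_real \<xi>' + of_real \<eta>' * \<i>) 1"
    using e1 e2 h by simp
  then show ?thesis using \<xi> \<eta> \<xi>' \<eta>' by (intro exI[of _ \<xi>] exI[of _ \<eta>] exI[of _ \<xi>'] exI[of _ \<eta>']) auto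
qed

lemma clairaut:
  fixes \<phi> :: "complex \<Rightarrow> real"
  assumes D: "open D" "z0 \<in> D"
   and d: "\<And>z. z\<in>D \<Longrightarrow> (\<phi> has_derivative \<Phi> z) (at z)"
   and dA: "\<And>z. z\<in>D \<Longrightarrow> ((\<lambda>w. \<Phi> w 1) has_derivative A z) (at z)"
   and dB: "\<And>z. z\<in>D \<Longrightarrow> ((\<lambda>w. \<Phi> w \<i>) has_derivative B z) (at z)"
   and cA: "continuous (at z0) (\<lambda>w. A w \<i>)"
   and cB: "continuous (at z0) (\<lambda>w. B w 1)"
  shows "A z0 \<i> = B z0 1"
proof (rule ccontr)
  assume ne: "A z0 \<i> \<noteq> B z0 1"
  define e where "e = \<bar>A z0 \<i> - B z0 1\<bar> / 2"
  have e: "e > 0" using ne unfolding e_def by simp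
  obtain d1 where d1: "d1 > 0" "\<And>w. dist w z0 < d1 \<Longrightarrow> dist (A w \<i>) (A z0 \<i>) < e"
    using cA e unfolding continuous_at_eps_delta by blast
  obtain d2 where d2: "d2 > 0" "\<And>w. dist w z0 < d2 \<Longrightarrow> dist (B w 1) (B z0 1) < e"
    using cB e unfolding continuous_at_eps_delta by blast
  obtain r where r: "r > 0" "ball z0 r \<subseteq> D" using D openE by blast
  define h where "h = min r (min d1 d2) / 4"
  have h: "h > 0" "2 * h < r" "2 * h < d1" "2 * h < d2" using r d1 d2 unfolding h_def by auto
  have nb: "norm (of_real a + of_real b * \<i> :: complex) \<le> 2 * h" if "\<bar>a\<bar> \<le> h" "\<bar>b\<bar> \<le> h" for a b
  proof -
    have "norm (of_real a + of_real b * \<i> :: complex) \<le> norm (of_real a :: complex) + norm (of_real b * \<i> :: complex)"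
      by (rule norm_triangle_ineq)
    also have "\<dots> = \<bar>a\<bar> + \<bar>b\<bar>" by (simp add: norm_mult)
    finally show ?thesis using that by simp
  qed
  have sub: "z0 + of_real a + of_real b * \<i> \<in> D" if "\<bar>a\<bar> \<le> h" "\<bar>b\<bar> \<le> h" for a b
  proof -
    have "dist (z0 + of_real a + of_real b * \<i>) z0 < r"
      using nb[OF that] h by (simp add: dist_norm add.assoc)
    then have "dist z0 (z0 + of_real a + of_real b * \<i>) < r" by (simp add: dist_commute)
    then show ?thesis using r by auto
  qed
  obtain a b c f where abcf: "\<bar>a\<bar> \<le> h" "\<bar>b\<bar> \<le> h" "\<bar>c\<bar> \<le> h" "\<bar>f\<bar> \<le> h"
     "A (z0 + of_real a + of_real b * \<i>) \<i> = B (z0 + of_real c + of_real f * \<i>) 1"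
    using clairaut_step[OF h(1) sub d dA dB] by blast
  have "dist (A (z0 + of_real a + of_real b * \<i>) \<i>) (A z0 \<i>) < e"
    using d1(2) nb[OF abcf(1,2)] h by (simp add: dist_norm add.assoc)
  moreover have "dist (B (z0 + of_real c + of_real f * \<i>) 1) (B z0 1) < e"
    using d2(2) nb[OF abcf(3,4)] h by (simp add: dist_norm add.assoc)
  ultimately show False using abcf(5) unfolding e_def dist_real_def by (simp add: abs_if split: if_splits)
qed



lemma moeb_in: "norm w < 1 \<Longrightarrow> norm z < 1 \<Longrightarrow> norm ((z - w) / (1 - cnj w * z)) < 1"
  using Moebius_function_norm_lt_1[of w z 0] by (simp add: Moebius_function_simple)

lemma moeb_hol: "norm w < 1 \<Longrightarrow> (\<lambda>z. (z - w) / (1 - cnj w * z)) holomorphic_on ball 0 1"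
  using Moebius_function_holomorphic[of w 0] by (simp add: Moebius_function_simple[abs_def])

lemma moeb_nz: "norm w < 1 \<Longrightarrow> norm z < 1 \<Longrightarrow> 1 - cnj w * z \<noteq> 0"
proof
  assume "norm w < 1" "norm z < 1" "1 - cnj w * z = 0"
  then have "norm (cnj w * z) = 1" by (metis eq_iff_diff_eq_0 norm_one)
  moreover have "norm (cnj w * z) < 1" using \<open>norm w < 1\<close> \<open>norm z < 1\<close>
    by (simp add: norm_mult) (metis mult_strict_mono' norm_ge_zero mult_1_right less_imp_le order.strict_trans2 mult_less_cancel_left1 mult_le_one)
  ultimately show False by simp
qed

lemma aux_div: "(x::complex) \<noteq> 1 \<Longrightarrow> 1 / (1 - x) = (1 - x) / (1 - x)^2"
proof -
  assume "x \<noteq> 1" then have "1 - x \<noteq> 0" by simp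
  then show ?thesis by (simp add: power2_eq_square)
qed

lemma schwarz_pick:
  assumes hol: "\<Phi> holomorphic_on ball 0 1" and into: "\<And>z. norm z < 1 \<Longrightarrow> norm (\<Phi> z) < 1"
    and a: "norm a < 1"
  shows "norm (deriv \<Phi> a) * (1 - norm a ^ 2) \<le> 1 - norm (\<Phi> a) ^ 2"
proof -
  define b where "b = \<Phi> a"
  have b: "norm b < 1" using into a b_def by simp
  define T where "T z = (z - (-a)) / (1 - cnj (-a) * z)" for z
  define S where "S w = (w - b) / (1 - cnj b * w)" for w
  define \<Psi> where "\<Psi> = S \<circ> (\<Phi> \<circ> T)"
  have Tin: "norm (T z) < 1" if "norm z < 1" for z using moeb_in[of "-a" z] a that unfolding T_def by simp
  have holT: "T holomorphic_on ball 0 1" using moeb_hol[of "-a"] a unfolding T_def[abs_def] by simp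
  have holS: "S holomorphic_on ball 0 1" using moeb_hol[of b] b unfolding S_def[abs_def] by simp
  have holPsi: "\<Psi> holomorphic_on ball 0 1"
  proof -
    have "(\<Phi> \<circ> T) holomorphic_on ball 0 1"
      by (rule holomorphic_on_compose_gen[OF holT hol]) (use Tin in auto)
    then show ?thesis unfolding \<Psi>_def
      by (rule holomorphic_on_compose_gen[OF _ holS]) (use Tin into in auto)
  qed
  have Psi0: "\<Psi> 0 = 0" unfolding \<Psi>_def T_def S_def b_def by simp
  have Psiin: "norm (\<Psi> z) < 1" if "norm z < 1" for z
    unfolding \<Psi>_def S_def o_def using moeb_in[OF b into[OF Tin[OF that]]] by simp
  have sch: "norm (deriv \<Psi> 0) \<le> 1"
    using Schwarz_Lemma(2)[OF holPsi Psi0 Psiin, of 0] by simp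
  have dT: "(T has_field_derivative (1 - a * cnj a)) (at 0)"
    unfolding T_def by (auto intro!: derivative_eq_intros)
  have T0: "T 0 = a" unfolding T_def by simp
  have dPhi: "(\<Phi> has_field_derivative deriv \<Phi> a) (at a)"
    using hol a by (intro holomorphic_derivI[of _ "ball 0 1"]) auto
  have nzb: "1 - cnj b * b \<noteq> 0" using moeb_nz[OF b b] .
  have dS: "(S has_field_derivative (1 / (1 - cnj b * b))) (at b)"
  proof -
    have "(S has_field_derivative ((1 * (1 - cnj b * b) - (b - b) * (0 - cnj b * 1)) / (1 - cnj b * b)^2)) (at b)"
      unfolding S_def using nzb apply (auto intro!: derivative_eq_intros)
      using aux_div[of "cnj b * b"] by simp
    moreover have "(1 * (1 - cnj b * b) - (b - b) * (0 - cnj b * 1)) / (1 - cnj b * b)^2 = 1 / (1 - cnj b * b)"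
      using nzb by (simp add: power2_eq_square)
    ultimately show ?thesis by simp
  qed
  have "(\<Psi> has_field_derivative (1 / (1 - cnj b * b)) * deriv \<Phi> a * (1 - a * cnj a)) (at 0)"
  proof -
    have "((\<Phi> \<circ> T) has_field_derivative deriv \<Phi> a * (1 - a * cnj a)) (at 0)"
      using DERIV_chain[OF _ dT, of \<Phi>] dPhi T0 by simp
    moreover have "(\<Phi> \<circ> T) 0 = b" using T0 b_def by simp
    ultimately show ?thesis
      unfolding \<Psi>_def using DERIV_chain[of S "1 / (1 - cnj b * b)" "\<Phi> \<circ> T" 0] dS by (simp add: mult.assoc)
  qed
  then have "deriv \<Psi> 0 = (1 / (1 - cnj b * b)) * deriv \<Phi> a * (1 - a * cnj a)"
    by (rule DERIV_imp_deriv)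
  moreover have e1: "1 - cnj b * b = of_real (1 - norm b ^ 2)" "1 - a * cnj a = of_real (1 - norm a ^ 2)"
    using complex_norm_square[of a] complex_norm_square[of b] by (simp_all add: mult.commute)
  ultimately have "deriv \<Psi> 0 = deriv \<Phi> a * of_real ((1 - norm a ^ 2) / (1 - norm b ^ 2))"
    by (simp only: e1) (simp add: field_simps)
  moreover have "(1 - norm a ^ 2) / (1 - norm b ^ 2) \<ge> 0"
    using a b by (simp add: abs_square_less_1 less_imp_le)
  ultimately have "norm (deriv \<Psi> 0) = norm (deriv \<Phi> a) * (1 - norm a ^ 2) / (1 - norm b ^ 2)"
    by (metis norm_mult norm_of_real abs_of_nonneg times_divide_eq_right)
  with sch have "norm (deriv \<Phi> a) * (1 - norm a ^ 2) / (1 - norm b ^ 2) \<le> 1" by simp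
  moreover have "1 - norm b ^ 2 > 0" using b by (simp add: abs_square_less_1)
  ultimately show ?thesis unfolding b_def by (simp add: divide_le_eq)
qed

lemma norm_pm1: "(norm (x + 1))^2 - (norm (x - 1))^2 = 4 * Re (x::complex)"
  by (simp only: cmod_power2) (simp add: power2_eq_square algebra_simps)

lemma strip_deriv_bound:
  assumes hol: "F holomorphic_on ball 0 1" and strip: "\<And>z. norm z < 1 \<Longrightarrow> \<bar>Re (F z)\<bar> < 1"
    and a: "norm a < 1"
  shows "norm (deriv F a) * (1 - norm a ^ 2) \<le> 4 / pi"
proof -
  define E where "E w = exp (\<i> * of_real (pi/2) * w)" for w
  define \<psi> where "\<psi> w = (E w - 1) / (E w + 1)" for w
  have ReE: "Re (E w) > 0" if "\<bar>Re w\<bar> < 1" for w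
  proof -
    have "pi * (-1) < pi * Re w" "pi * Re w < pi * 1"
      using that pi_gt_zero by (intro mult_strict_left_mono; auto simp: abs_less_iff)+
    then have "cos (pi / 2 * Re w) > 0"
      by (intro cos_gt_zero_pi) auto
    then show ?thesis unfolding E_def by (simp add: Re_exp)
  qed
  have Enz: "E w + 1 \<noteq> 0" if "\<bar>Re w\<bar> < 1" for w
  proof -
    have "Re (E w + 1) > 0" using ReE[OF that] by simp
    then show ?thesis by (metis less_irrefl zero_complex.simps(1))
  qed
  have normE: "norm (E w - 1) < norm (E w + 1)" if "\<bar>Re w\<bar> < 1" for w
  proof -
    have "(norm (E w - 1))^2 < (norm (E w + 1))^2" using norm_pm1[of "E w"] ReE[OF that] by linarith
    then show ?thesis by (rule power_less_imp_less_base) simp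
  qed
  have psi_in: "norm (\<psi> w) < 1" if "\<bar>Re w\<bar> < 1" for w
  proof -
    have "norm (E w + 1) > 0" using Enz[OF that] by simp
    then show ?thesis unfolding \<psi>_def using normE[OF that] by (simp add: norm_divide)
  qed
  have dE: "(E has_field_derivative (\<i> * of_real (pi/2) * E w)) (at w)" for w
    unfolding E_def by (auto intro!: derivative_eq_intros simp: mult.commute)
  have dpsi: "(\<psi> has_field_derivative (\<i> * of_real pi * E w / (E w + 1)^2)) (at w)" if "\<bar>Re w\<bar> < 1" for w
  proof -
    have d1: "((\<lambda>w. E w - 1) has_field_derivative (\<i> * of_real (pi/2) * E w)) (at w)"
      using DERIV_diff[OF dE DERIV_const[of 1]] by simp
    have d2: "((\<lambda>w. E w + 1) has_field_derivative (\<i> * of_real (pi/2) * E w)) (at w)"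
      using DERIV_add[OF dE DERIV_const[of 1]] by simp
    have "(\<psi> has_field_derivative (((\<i> * of_real (pi/2) * E w) * (E w + 1) - (E w - 1) * (\<i> * of_real (pi/2) * E w)) / ((E w + 1) * (E w + 1)))) (at w)"
      unfolding \<psi>_def[abs_def] by (rule DERIV_divide[OF d1 d2 Enz[OF that]])
    moreover have "((\<i> * of_real (pi/2) * E w) * (E w + 1) - (E w - 1) * (\<i> * of_real (pi/2) * E w)) = \<i> * of_real pi * E w"
      by (simp add: field_simps)
    ultimately show ?thesis by (simp add: power2_eq_square)
  qed
  have holF: "F field_differentiable at z" if "norm z < 1" for z
    using hol that by (simp add: holomorphic_on_open field_differentiable_def)
  define \<Phi> where "\<Phi> = \<psi> \<circ> F"
  have holPhi: "\<Phi> holomorphic_on ball 0 1"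
    unfolding \<Phi>_def
  proof (rule holomorphic_on_compose_gen[OF hol])
    show "\<psi> holomorphic_on {w. \<bar>Re w\<bar> < 1}"
      using dpsi unfolding holomorphic_on_def field_differentiable_def
      by (meson has_field_derivative_at_within mem_Collect_eq)
  qed (use strip in auto)
  have Phi_in: "norm (\<Phi> z) < 1" if "norm z < 1" for z
    unfolding \<Phi>_def using psi_in strip that by simp
  define w where "w = F a"
  have w: "\<bar>Re w\<bar> < 1" using strip a w_def by simp
  have dF: "(F has_field_derivative deriv F a) (at a)"
    using hol a by (intro holomorphic_derivI[of _ "ball 0 1"]) auto
  have "(\<Phi> has_field_derivative (\<i> * of_real pi * E w / (E w + 1)^2) * deriv F a) (at a)"
    unfolding \<Phi>_def using DERIV_chain[OF _ dF, of \<psi>] dpsi[OF w] unfolding w_def by blast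
  then have dPhi: "deriv \<Phi> a = (\<i> * of_real pi * E w / (E w + 1)^2) * deriv F a"
    by (rule DERIV_imp_deriv)
  have sp: "norm (deriv \<Phi> a) * (1 - norm a ^ 2) \<le> 1 - norm (\<Phi> a) ^ 2"
    by (rule schwarz_pick[OF holPhi Phi_in a])
  have nE: "norm (E w) > 0" using ReE[OF w] by auto
  have nE1: "norm (E w + 1) > 0" using Enz[OF w] by auto
  have "1 - norm (\<Phi> a) ^ 2 = 4 * Re (E w) / (norm (E w + 1))^2"
  proof -
    have "norm (\<Phi> a) = norm (E w - 1) / norm (E w + 1)"
      unfolding \<Phi>_def \<psi>_def w_def by (simp add: norm_divide)
    then have "1 - norm (\<Phi> a) ^ 2 = ((norm (E w + 1))^2 - (norm (E w - 1))^2) / (norm (E w + 1))^2"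
      using nE1 by (simp add: power_divide diff_divide_distrib)
    then show ?thesis using norm_pm1[of "E w"] by simp
  qed
  moreover have "norm (deriv \<Phi> a) = pi * norm (E w) / (norm (E w + 1))^2 * norm (deriv F a)"
    unfolding dPhi by (simp add: norm_mult norm_divide norm_power)
  ultimately have "pi * norm (E w) / (norm (E w + 1))^2 * norm (deriv F a) * (1 - norm a ^ 2)
       \<le> 4 * Re (E w) / (norm (E w + 1))^2" using sp by simp
  then have "pi * norm (E w) * (norm (deriv F a) * (1 - norm a ^ 2)) \<le> 4 * Re (E w)"
    using nE1 by (simp add: divide_le_eq field_simps)
  also have "\<dots> \<le> 4 * norm (E w)" using complex_Re_le_cmod by simp
  finally have "pi * (norm (deriv F a) * (1 - norm a ^ 2)) \<le> 4"
    using nE by (simp add: mult.assoc)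
  then show ?thesis using pi_gt_zero by (simp add: le_divide_eq mult.commute)
qed



lemma tanh_artanh_real: "\<bar>x::real\<bar> < 1 \<Longrightarrow> tanh (artanh x) = x"
proof -
  assume x: "\<bar>x\<bar> < 1"
  define q where "q = (1 + x) / (1 - x)"
  have q: "q > 0" using x unfolding q_def by (auto simp: abs_less_iff)
  have e: "exp (- 2 * artanh x) = 1 / q"
    unfolding artanh_def q_def[symmetric] using q by (simp add: exp_minus exp_ln inverse_eq_divide)
  have "tanh (artanh x) = (1 - 1/q) / (1 + 1/q)" by (simp only: tanh_real_altdef e)
  also have "\<dots> = ((q - 1) / q) / ((q + 1) / q)" using q by (simp add: diff_divide_distrib add_divide_distrib)
  also have "\<dots> = (q - 1) / (q + 1)" using q by simp
  also have "\<dots> = x" using x unfolding q_def by (auto simp: field_simps abs_less_iff)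
  finally show ?thesis .
qed

lemma cplx_id1: "of_real (Re X) - \<i> * of_real (Re Y) = (X - \<i> * Y) / 2 + cnj ((X + \<i> * Y) / 2)"
  by (simp add: complex_eq_iff field_simps)

lemma cplx_id2: "Re h *\<^sub>R X + Im h *\<^sub>R Y = h * ((X - \<i> * Y) / 2) + cnj h * ((X + \<i> * Y) / 2)"
  by (simp add: complex_eq_iff field_simps)

lemma grad_bound:
  assumes fH: "f \<in> HQR K unit_disc strip_S" and z: "norm z < 1"
  shows "norm (frechet_derivative f (at z) h) \<le> K * (4 / pi) / (1 - norm z ^ 2) * norm h"
proof -
  define D where "D = ball (0::complex) 1"
  have oD: "open D" unfolding D_def by simp
  have zD: "z \<in> D" using z unfolding D_def by simp
  from fH have harm: "harmonic_on D f" and img: "f ` D \<subseteq> strip_S"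
    and qr: "\<And>w. w \<in> D \<Longrightarrow> norm (dz f w) > norm (dzbar f w) \<and>
         (norm (dz f w) + norm (dzbar f w)) / (norm (dz f w) - norm (dzbar f w)) \<le> K"
    unfolding HQR_def unit_disc_def D_def by auto
  from harm have fd: "\<And>w. w \<in> D \<Longrightarrow> f differentiable (at w)"
    and dd: "\<And>w. w \<in> D \<Longrightarrow> dx f differentiable (at w) \<and> dy f differentiable (at w)"
    and c1: "continuous_on D (dy (dx f))" and lap: "\<And>w. w \<in> D \<Longrightarrow> dx (dx f) w + dy (dy f) w = 0"
    unfolding harmonic_on_def by auto
  define Df where "Df w = frechet_derivative f (at w)" for w
  have hasDf: "(f has_derivative Df w) (at w)" if "w \<in> D" for w
    using fd[OF that] frechet_derivative_works unfolding Df_def by blast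
  have dxeq: "dx f = (\<lambda>w. Df w 1)" and dyeq: "dy f = (\<lambda>w. Df w \<i>)"
    by (simp_all add: dx_def dy_def Df_def fun_eq_iff)
  define Dx where "Dx w = frechet_derivative (dx f) (at w)" for w
  define Dy where "Dy w = frechet_derivative (dy f) (at w)" for w
  have hasDx: "((\<lambda>w. Df w 1) has_derivative Dx w) (at w)" if "w \<in> D" for w
    using dd[OF that] frechet_derivative_works unfolding Dx_def dxeq by blast
  have hasDy: "((\<lambda>w. Df w \<i>) has_derivative Dy w) (at w)" if "w \<in> D" for w
    using dd[OF that] frechet_derivative_works unfolding Dy_def dyeq by blast
  have lap': "Re (Dx w 1) + Re (Dy w \<i>) = 0" if "w \<in> D" for w
    using lap[OF that] unfolding dx_def[of "dx f"] dy_def[of "dy f"] Dx_def Dy_def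
    by (metis plus_complex.simps(1) zero_complex.simps(1))
  have sym: "Re (Dx w \<i>) = Re (Dy w 1)" if "w \<in> D" for w
  proof (rule clairaut[of D w "\<lambda>w. Re (f w)" "\<lambda>w h. Re (Df w h)" "\<lambda>w h. Re (Dx w h)" "\<lambda>w h. Re (Dy w h)"])
    show "open D" "w \<in> D" by (fact oD) (fact that)
    show "((\<lambda>w. Re (f w)) has_derivative (\<lambda>h. Re (Df z h))) (at z)" if "z \<in> D" for z
      using has_derivative_Re[OF hasDf[OF that]] .
    show "((\<lambda>w. Re (Df w 1)) has_derivative (\<lambda>h. Re (Dx z h))) (at z)" if "z \<in> D" for z
      using has_derivative_Re[OF hasDx[OF that]] .
    show "((\<lambda>w. Re (Df w \<i>)) has_derivative (\<lambda>h. Re (Dy z h))) (at z)" if "z \<in> D" for z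
      using has_derivative_Re[OF hasDy[OF that]] .
    have "continuous (at w) (dy (dx f))" using c1 oD that continuous_on_eq_continuous_at by blast
    then show "continuous (at w) (\<lambda>w. Re (Dx w \<i>))"
      unfolding dy_def[of "dx f"] Dx_def by (rule isCont_Re)
    have c2: "continuous_on D (dx (dy f))" using harm unfolding harmonic_on_def by auto
    have "continuous (at w) (dx (dy f))" using c2 oD that continuous_on_eq_continuous_at by blast
    then show "continuous (at w) (\<lambda>w. Re (Dy w 1))"
      unfolding dx_def[of "dy f"] Dy_def by (rule isCont_Re)
  qed
  define p where "p w = of_real (Re (Df w 1)) - \<i> * of_real (Re (Df w \<i>))" for w
  have dp: "(p has_field_derivative (of_real (Re (Dx w 1)) - \<i> * of_real (Re (Dy w 1)))) (at w)"
    if "w \<in> D" for w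
  proof -
    have "(p has_derivative (\<lambda>h. of_real (Re (Dx w h)) - \<i> * of_real (Re (Dy w h)))) (at w)"
      unfolding p_def[abs_def]
      by (intro derivative_intros has_derivative_Re hasDx hasDy that)
    moreover have "(\<lambda>h. of_real (Re (Dx w h)) - \<i> * of_real (Re (Dy w h))) =
        (\<lambda>h. (of_real (Re (Dx w 1)) - \<i> * of_real (Re (Dy w 1))) * h)"
    proof
      fix h
      have lx: "linear (Dx w)" using hasDx[OF that] has_derivative_linear by blast
      have ly: "linear (Dy w)" using hasDy[OF that] has_derivative_linear by blast
      have lp2: "Re (Dy w \<i>) = - Re (Dx w 1)" using lap'[OF that] by linarith
      show "of_real (Re (Dx w h)) - \<i> * of_real (Re (Dy w h)) =
        (of_real (Re (Dx w 1)) - \<i> * of_real (Re (Dy w 1))) * h"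
        using lin_decomp[OF lx, of h] lin_decomp[OF ly, of h] sym[OF that] lp2
        by (simp add: complex_eq_iff algebra_simps)
    qed
    ultimately show ?thesis by (simp add: has_field_derivative_def)
  qed
  have holp: "p holomorphic_on D"
    using dp oD by (auto simp: holomorphic_on_open)
  obtain G where G: "\<And>x. x \<in> D \<Longrightarrow> (G has_field_derivative p x) (at x within D)"
    using holomorphic_convex_primitive'[of D p] holp oD unfolding D_def by auto
  have G': "(G has_field_derivative p x) (at x)" if "x \<in> D" for x
    using G[OF that] oD that at_within_open by fastforce
  have zero: "((\<lambda>w. Re (G w) - Re (f w)) has_derivative (\<lambda>h. 0)) (at x within D)" if "x \<in> D" for x
  proof -
    have "((\<lambda>w. Re (G w) - Re (f w)) has_derivative (\<lambda>h. Re (p x * h) - Re (Df x h))) (at x)"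
      using G'[OF that] hasDf[OF that] unfolding has_field_derivative_def
      by (intro derivative_intros has_derivative_Re) auto
    moreover have "(\<lambda>h. Re (p x * h) - Re (Df x h)) = (\<lambda>h. 0)"
    proof
      fix h
      have l: "linear (Df x)" using hasDf[OF that] has_derivative_linear by blast
      show "Re (p x * h) - Re (Df x h) = 0"
        using lin_decomp[OF l, of h] unfolding p_def by (simp add: algebra_simps)
    qed
    ultimately show ?thesis using has_derivative_at_withinI by fastforce
  qed
  obtain c where c: "\<And>x. x \<in> D \<Longrightarrow> Re (G x) - Re (f x) = c"
    using has_derivative_zero_constant[of D, OF _ zero] unfolding D_def by auto
  define F where "F w = G w - of_real c" for w
  have ReF: "Re (F w) = Re (f w)" if "w \<in> D" for w using c[OF that] unfolding F_def by simp
  have dF: "(F has_field_derivative p x) (at x)" if "x \<in> D" for x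
    unfolding F_def[abs_def] using G'[OF that] by (auto intro!: derivative_eq_intros)
  have holF: "F holomorphic_on ball 0 1"
    using dF oD unfolding D_def by (auto simp: holomorphic_on_open) blast
  have stripF: "\<bar>Re (F w)\<bar> < 1" if "norm w < 1" for w
  proof -
    have "w \<in> D" using that unfolding D_def by simp
    then have "f w \<in> strip_S" using img by auto
    then show ?thesis using ReF[OF \<open>w \<in> D\<close>] unfolding strip_S_def by auto
  qed
  have pb: "norm (p z) * (1 - norm z ^ 2) \<le> 4 / pi"
    using strip_deriv_bound[OF holF stripF z] DERIV_imp_deriv[OF dF[OF zD]] by simp
  have nz: "1 - norm z ^ 2 > 0" using z by (simp add: abs_square_less_1)
  have pb': "norm (p z) \<le> (4 / pi) / (1 - norm z ^ 2)" using pb nz by (simp add: le_divide_eq mult_ac)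
  define n1 where "n1 = norm (dz f z)"
  define n2 where "n2 = norm (dzbar f z)"
  have q1: "n1 > n2" and q2: "(n1 + n2) / (n1 - n2) \<le> K" using qr[OF zD] unfolding n1_def n2_def by auto
  have q3: "n1 + n2 \<le> K * (n1 - n2)" using q1 q2 by (simp add: divide_le_eq)
  have dzeq: "dz f z = (Df z 1 - \<i> * Df z \<i>) / 2" and dzbeq: "dzbar f z = (Df z 1 + \<i> * Df z \<i>) / 2"
    unfolding dz_def dzbar_def dxeq dyeq by simp_all
  have l: "linear (Df z)" using hasDf[OF zD] has_derivative_linear by blast
  have "Df z h = h * dz f z + cnj h * dzbar f z"
    unfolding dzeq dzbeq using lin_decomp[OF l, of h] cplx_id2 by simp
  then have "norm (Df z h) \<le> norm (h * dz f z) + norm (cnj h * dzbar f z)"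
    by (simp add: norm_triangle_ineq)
  also have "\<dots> = norm h * (n1 + n2)"
    unfolding n1_def n2_def by (simp add: norm_mult distrib_left)
  finally have a1: "norm (Df z h) \<le> norm h * (n1 + n2)" .
  have a2: "n1 - n2 \<le> norm (p z)"
  proof -
    have "p z = dz f z + cnj (dzbar f z)"
      unfolding p_def dzeq dzbeq by (rule cplx_id1)
    moreover have "norm (dz f z) - norm (cnj (dzbar f z)) \<le> norm (dz f z + cnj (dzbar f z))"
      by (rule norm_diff_ineq)
    ultimately show ?thesis unfolding n1_def n2_def by simp
  qed
  have n2: "n2 \<ge> 0" unfolding n2_def by simp
  have Kpos: "K > 0"
  proof -
    have "K * (n1 - n2) > 0" using q3 q1 n2 by linarith
    then show ?thesis using q1 by (simp add: zero_less_mult_iff)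
  qed
  have "norm (Df z h) \<le> norm h * (K * (n1 - n2))"
    using a1 q3 by (meson mult_left_mono norm_ge_zero order_trans)
  also have "\<dots> \<le> norm h * (K * norm (p z))"
    using a2 Kpos by (intro mult_left_mono) auto
  also have "\<dots> \<le> norm h * (K * ((4 / pi) / (1 - norm z ^ 2)))"
    using pb' Kpos by (intro mult_left_mono) auto
  finally show ?thesis unfolding Df_def by (simp add: mult_ac)
qed

lemma onorm_sc: "onorm (\<lambda>t::real. t *\<^sub>R V) = norm (V::complex)"
proof -
  have "onorm (\<lambda>t::real. t) = 1" by (rule onorm_id)
  then show ?thesis using onorm_scaleR_left[OF bounded_linear_ident, of V] by simp
qed

lemma upper_bound:
  assumes fH: "f \<in> HQR K unit_disc strip_S" and f0: "f 0 = 0" and z: "z \<in> unit_disc"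
  shows "norm (f z) \<le> 4 / pi * K * artanh (norm z)"
proof (cases "z = 0")
  case True then show ?thesis using f0 by simp
next
  case False
  define r where "r = norm z"
  have r: "0 < r" "r < 1" using False z unfolding r_def unit_disc_def by auto
  define u where "u = z / of_real r"
  have nu: "norm u = 1" using r unfolding u_def r_def by (simp add: norm_divide)
  define S where "S = artanh r"
  have S: "S \<ge> 0" unfolding S_def using r
    by (metis artanh_tanh_real less_imp_le tanh_artanh_real tanh_real_nonneg_iff abs_of_pos)
  define \<gamma> where "\<gamma> s = of_real (tanh s) * u" for s
  have ng: "norm (\<gamma> s) = \<bar>tanh s\<bar>" for s unfolding \<gamma>_def using nu by (simp add: norm_mult)
  have gD: "norm (\<gamma> s) < 1" for s using ng tanh_real_lt_1[of s] tanh_real_gt_neg1[of s] by auto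
  from fH have harm: "harmonic_on unit_disc f" unfolding HQR_def by auto
  have fd: "(f has_derivative frechet_derivative f (at w)) (at w)" if "norm w < 1" for w
  proof -
    have "f differentiable (at w)" using harm that unfolding harmonic_on_def unit_disc_def by auto
    then show ?thesis using frechet_derivative_works by blast
  qed
  define B where "B = K * (4 / pi)"
  have dg: "((f \<circ> \<gamma>) has_derivative (\<lambda>t. t *\<^sub>R frechet_derivative f (at (\<gamma> s)) (of_real (1 - tanh s ^ 2) * u))) (at s within {0..S})" for s
  proof -
    have dt: "(tanh has_real_derivative (1 - tanh s ^ 2)) (at s within {0..S})"
      using has_field_derivative_tanh[of "\<lambda>x. x" s 1 "{0..S}"] by (simp add: DERIV_ident)
    have "(\<gamma> has_vector_derivative (of_real (1 - tanh s ^ 2) * u)) (at s within {0..S})"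
      unfolding \<gamma>_def[abs_def]
      by (rule has_vector_derivative_mult_left[OF has_vector_derivative_of_real[OF dt]])
    from vector_derivative_diff_chain_within[OF this has_derivative_at_withinI[OF fd[OF gD[of s]]]]
    show ?thesis unfolding has_vector_derivative_def .
  qed
  have bd: "onorm (\<lambda>t. t *\<^sub>R frechet_derivative f (at (\<gamma> s)) (of_real (1 - tanh s ^ 2) * u)) \<le> B" for s
  proof -
    have t1: "1 - tanh s ^ 2 > 0" using tanh_real_lt_1[of s] tanh_real_gt_neg1[of s]
      by (simp add: abs_square_less_1 abs_less_iff)
    have "onorm (\<lambda>t. t *\<^sub>R frechet_derivative f (at (\<gamma> s)) (of_real (1 - tanh s ^ 2) * u))
        = norm (frechet_derivative f (at (\<gamma> s)) (of_real (1 - tanh s ^ 2) * u))"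
      by (rule onorm_sc)
    also have "\<dots> \<le> K * (4 / pi) / (1 - norm (\<gamma> s) ^ 2) * norm (of_real (1 - tanh s ^ 2) * u :: complex)"
      by (rule grad_bound[OF fH gD])
    also have "\<dots> = B"
    proof -
      have e: "norm (of_real (1 - tanh s ^ 2) * u :: complex) = 1 - tanh s ^ 2"
        by (simp only: norm_mult norm_of_real nu) (use t1 in simp)
      have e2: "1 - norm (\<gamma> s) ^ 2 = 1 - tanh s ^ 2" using ng by simp
      show ?thesis unfolding e e2 B_def using t1 by simp
    qed
    finally show ?thesis .
  qed
  have "norm ((f \<circ> \<gamma>) S - (f \<circ> \<gamma>) 0) \<le> B * norm (S - 0)"
    by (rule differentiable_bound[OF convex_real_interval(5) dg bd]) (use S in auto)
  moreover have "\<gamma> S = z" unfolding \<gamma>_def S_def u_def using r tanh_artanh_real[of r] by simp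
  moreover have "\<gamma> 0 = 0" unfolding \<gamma>_def by simp
  ultimately show ?thesis using f0 S unfolding B_def S_def r_def by (simp add: mult_ac)
qed



definition Aff :: "real \<Rightarrow> complex \<Rightarrow> complex" where
  "Aff K w = of_real (Re w) + \<i> * of_real (K * Im w)"

lemma Aff_deriv:
  assumes "(Q has_field_derivative q) (at w)"
  shows "((\<lambda>v. Aff K (Q v)) has_derivative (\<lambda>h. Aff K (q * h))) (at w)"
proof -
  have "(Q has_derivative (\<lambda>h. q * h)) (at w)" using assms by (simp add: has_field_derivative_def)
  then show ?thesis unfolding Aff_def
    by (auto intro!: derivative_eq_intros)
qed

lemma Aff_add: "Aff K a + Aff K b = Aff K (a + b)"
  by (simp add: Aff_def complex_eq_iff algebra_simps)

lemma aff_HQR: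
  assumes hol: "H holomorphic_on ball 0 1" and nz: "\<And>w. norm w < 1 \<Longrightarrow> deriv H w \<noteq> 0"
    and K: "K \<ge> 1" and img: "\<And>w. norm w < 1 \<Longrightarrow> \<bar>Re (H w)\<bar> < 1"
  shows "(\<lambda>w. Aff K (H w)) \<in> HQR K unit_disc strip_S"
proof -
  define D where "D = ball (0::complex) 1"
  have oD: "open D" unfolding D_def by simp
  define g where "g w = Aff K (H w)" for w
  define H1 where "H1 = deriv H"
  define H2 where "H2 = deriv H1"
  have hol1: "H1 holomorphic_on D" unfolding H1_def D_def using hol by (intro holomorphic_deriv) auto
  have hol2: "H2 holomorphic_on D" unfolding H2_def using hol1 oD by (intro holomorphic_deriv) auto
  have dH: "(H has_field_derivative H1 w) (at w)" if "w \<in> D" for w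
    unfolding H1_def using hol that oD unfolding D_def by (intro holomorphic_derivI) auto
  have dH1: "(H1 has_field_derivative H2 w) (at w)" if "w \<in> D" for w
    unfolding H2_def using hol1 that oD by (intro holomorphic_derivI) auto
  have dH1i: "((\<lambda>v. H1 v * \<i>) has_field_derivative H2 w * \<i>) (at w)" if "w \<in> D" for w
    using DERIV_cmult_right[OF dH1[OF that], of \<i>] by simp
  have c2: "continuous_on D H2" using hol2 holomorphic_on_imp_continuous_on by blast
  have c1: "continuous_on D H1" using hol1 holomorphic_on_imp_continuous_on by blast
  have c2i: "continuous_on D (\<lambda>w. H2 w * \<i>)" using c2 by (intro continuous_intros)
  have c2m: "continuous_on D (\<lambda>w. - H2 w)" using c2 by (intro continuous_intros)
  have c1i: "continuous_on D (\<lambda>w. H1 w * \<i>)" using c1 by (intro continuous_intros)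
  have Fg: "frechet_derivative g (at w) = (\<lambda>h. Aff K (H1 w * h))" if "w \<in> D" for w
    using Aff_deriv[OF dH[OF that]] frechet_derivative_at unfolding g_def by metis
  have gdiff: "g differentiable (at w)" if "w \<in> D" for w
    using Aff_deriv[OF dH[OF that]] unfolding g_def differentiable_def by blast
  have dxg: "dx g w = Aff K (H1 w)" and dyg: "dy g w = Aff K (H1 w * \<i>)" if "w \<in> D" for w
    using Fg[OF that] by (simp_all add: dx_def dy_def)
  have hdx: "(dx g has_derivative (\<lambda>h. Aff K (H2 w * h))) (at w)" if "w \<in> D" for w
    by (rule has_derivative_transform_within_open[OF Aff_deriv[OF dH1[OF that]] oD that])
       (simp add: dxg)
  have hdy: "(dy g has_derivative (\<lambda>h. Aff K (H2 w * \<i> * h))) (at w)" if "w \<in> D" for w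
    by (rule has_derivative_transform_within_open[OF Aff_deriv[OF dH1i[OF that]] oD that])
       (simp add: dyg)
  have Fdx: "frechet_derivative (dx g) (at w) = (\<lambda>h. Aff K (H2 w * h))" if "w \<in> D" for w
    using hdx[OF that] frechet_derivative_at by metis
  have Fdy: "frechet_derivative (dy g) (at w) = (\<lambda>h. Aff K (H2 w * \<i> * h))" if "w \<in> D" for w
    using hdy[OF that] frechet_derivative_at by metis
  have xx: "dx (dx g) w = Aff K (H2 w)" and yx: "dy (dx g) w = Aff K (H2 w * \<i>)"
    and xy: "dx (dy g) w = Aff K (H2 w * \<i>)" and yy: "dy (dy g) w = Aff K (- H2 w)" if "w \<in> D" for w
    using Fdx[OF that] Fdy[OF that] by (simp_all add: mult.assoc dx_def[of "dx g"] dy_def[of "dx g"] dx_def[of "dy g"] dy_def[of "dy g"])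
  have contA: "continuous_on D (\<lambda>w. Aff K (Q w))" if "continuous_on D Q" for Q
    unfolding Aff_def by (intro continuous_intros that)
  have harm: "harmonic_on D g"
    unfolding harmonic_on_def
  proof (intro conjI ballI)
    show "open D" by (fact oD)
    show "g differentiable at z" if "z \<in> D" for z using gdiff[OF that] .
    show "dx g differentiable at z" if "z \<in> D" for z using hdx[OF that] differentiable_def by blast
    show "dy g differentiable at z" if "z \<in> D" for z using hdy[OF that] differentiable_def by blast
    show "continuous_on D (dx (dx g))"
      using continuous_on_cong[of D D "dx (dx g)" "\<lambda>w. Aff K (H2 w)"] contA[OF c2] xx by auto
    show "continuous_on D (dy (dx g))"
      using continuous_on_cong[of D D "dy (dx g)" "\<lambda>w. Aff K (H2 w * \<i>)"] contA[OF c2i] yx by auto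
    show "continuous_on D (dx (dy g))"
      using continuous_on_cong[of D D "dx (dy g)" "\<lambda>w. Aff K (H2 w * \<i>)"] contA[OF c2i] xy by auto
    show "continuous_on D (dy (dy g))"
      using continuous_on_cong[of D D "dy (dy g)" "\<lambda>w. Aff K (- H2 w)"] contA[OF c2m] yy by auto
    show "dx (dx g) z + dy (dy g) z = 0" if "z \<in> D" for z
      using xx[OF that] yy[OF that] Aff_add[of K "H2 z" "- H2 z"] by (simp add: Aff_def)
  qed
  have cdx: "continuous_on D (dx g)"
    using continuous_on_cong[of D D "dx g" "\<lambda>w. Aff K (H1 w)"] contA[OF c1] dxg by auto
  have cdy: "continuous_on D (dy g)"
    using continuous_on_cong[of D D "dy g" "\<lambda>w. Aff K (H1 w * \<i>)"] contA[OF c1i] dyg by auto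
  have imgS: "g ` D \<subseteq> strip_S"
    using img unfolding g_def D_def strip_S_def Aff_def by (auto simp: abs_less_iff)
  have qc: "norm (dz g w) > norm (dzbar g w) \<and>
         (norm (dz g w) + norm (dzbar g w)) / (norm (dz g w) - norm (dzbar g w)) \<le> K" if "w \<in> D" for w
  proof -
    have e1: "dz g w = of_real ((1 + K) / 2) * H1 w"
      unfolding dz_def dxg[OF that] dyg[OF that] Aff_def by (simp add: complex_eq_iff field_simps)
    have e2: "dzbar g w = of_real ((1 - K) / 2) * cnj (H1 w)"
      unfolding dzbar_def dxg[OF that] dyg[OF that] Aff_def by (simp add: complex_eq_iff field_simps)
    have n: "norm (H1 w) > 0" using nz[of w] that unfolding D_def H1_def by simp
    have n1: "norm (dz g w) = (1 + K) / 2 * norm (H1 w)" unfolding e1 by (simp only: norm_mult norm_of_real) (use K in simp)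
    have n2: "norm (dzbar g w) = (K - 1) / 2 * norm (H1 w)" unfolding e2 by (simp only: norm_mult norm_of_real complex_mod_cnj) (use K in simp)
    show ?thesis unfolding n1 n2 using n K by (simp add: field_simps)
  qed
  show ?thesis unfolding HQR_def g_def[symmetric] unit_disc_def D_def[symmetric]
    using harm cdx cdy imgS qc by auto
qed



lemma qpos: "norm (x::complex) < 1 \<Longrightarrow> Re ((1 + x) / (1 - x)) > 0"
proof -
  assume x: "norm x < 1"
  have nz: "1 - x \<noteq> 0" using x by auto
  have "(Re x)^2 + (Im x)^2 < 1" using x by (metis cmod_power2 abs_norm_cancel abs_square_less_1)
  then have num: "(1 + Re x) * (1 - Re x) + Im x * (- Im x) > 0" by (simp add: power2_eq_square algebra_simps)
  have "Re ((1 + x) / (1 - x)) = ((1 + Re x) * (1 - Re x) + Im x * (- Im x)) / (norm (1 - x))^2"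
    by (simp add: Re_divide')
  then show ?thesis using num nz by simp
qed

lemma sharp:
  assumes K: "K \<ge> 1" and z: "z \<in> unit_disc"
  shows "\<exists>g\<in>HQR K unit_disc strip_S. g 0 = 0 \<and> norm (g z) = 4 / pi * K * artanh (norm z)"
proof -
  define \<rho> where "\<rho> = (if z = 0 then 1 else cnj z / of_real (norm z))"
  have n\<rho>: "norm \<rho> = 1" unfolding \<rho>_def by (simp add: norm_divide)
  have \<rho>z: "\<rho> * z = of_real (norm z)"
    unfolding \<rho>_def by (auto simp: complex_norm_square[symmetric] power2_eq_square mult.commute)
  define Q where "Q w = (1 + \<rho> * w) / (1 - \<rho> * w)" for w
  define c where "c = 2 * \<i> / of_real pi"
  define H where "H w = c * Ln (Q w)" for w
  have xin: "norm (\<rho> * w) < 1" if "norm w < 1" for w using that n\<rho> by (simp add: norm_mult)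
  have ReQ: "Re (Q w) > 0" if "norm w < 1" for w unfolding Q_def using qpos[OF xin[OF that]] .
  have dH: "\<exists>D. D \<noteq> 0 \<and> (H has_field_derivative D) (at w)" if w: "norm w < 1" for w
  proof -
    have nz: "1 - \<rho> * w \<noteq> 0" using xin[OF w] by auto
    have d1: "((\<lambda>w. 1 + \<rho> * w) has_field_derivative \<rho>) (at w)"
      by (auto intro!: derivative_eq_intros)
    have d2: "((\<lambda>w. 1 - \<rho> * w) has_field_derivative - \<rho>) (at w)"
      by (auto intro!: derivative_eq_intros)
    define Q' where "Q' = (\<rho> * (1 - \<rho> * w) - (1 + \<rho> * w) * - \<rho>) / ((1 - \<rho> * w) * (1 - \<rho> * w))"
    have dQ: "(Q has_field_derivative Q') (at w)"
      unfolding Q_def[abs_def] Q'_def by (rule DERIV_divide[OF d1 d2 nz])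
    have Q'eq: "Q' = 2 * \<rho> / ((1 - \<rho> * w) * (1 - \<rho> * w))" unfolding Q'_def by (simp add: algebra_simps)
    have Q'nz: "Q' \<noteq> 0" unfolding Q'eq using nz n\<rho> by auto
    have Qnot: "Q w \<notin> \<real>\<^sub>\<le>\<^sub>0" using ReQ[OF w] by (auto simp: complex_nonpos_Reals_iff)
    have QnZ: "Q w \<noteq> 0" using ReQ[OF w] by auto
    have "((\<lambda>w. Ln (Q w)) has_field_derivative inverse (Q w) * Q') (at w)"
      using DERIV_chain2[OF has_field_derivative_Ln[OF Qnot] dQ] .
    then have "(H has_field_derivative c * (inverse (Q w) * Q')) (at w)"
      unfolding H_def[abs_def] by (rule DERIV_cmult)
    moreover have "c * (inverse (Q w) * Q') \<noteq> 0" using Q'nz QnZ unfolding c_def by simp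
    ultimately show ?thesis by blast
  qed
  have holH: "H holomorphic_on ball 0 1"
    using dH by (auto simp: holomorphic_on_open) blast
  have nzH: "deriv H w \<noteq> 0" if "norm w < 1" for w
    using dH[OF that] DERIV_imp_deriv by metis
  have imgH: "\<bar>Re (H w)\<bar> < 1" if "norm w < 1" for w
  proof -
    have "\<bar>Im (Ln (Q w))\<bar> < pi / 2" using Re_Ln_pos_lt_imp ReQ[OF that] by blast
    moreover have "Re (H w) = - 2 * Im (Ln (Q w)) / pi" unfolding H_def c_def by simp
    ultimately show ?thesis using pi_gt_zero by (simp add: abs_mult abs_divide divide_less_eq)
  qed
  define g where "g w = Aff K (H w)" for w
  have gH: "g \<in> HQR K unit_disc strip_S"
    unfolding g_def[abs_def] by (rule aff_HQR[OF holH nzH K imgH])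
  have g0: "g 0 = 0" unfolding g_def H_def Q_def Aff_def by simp
  define r where "r = norm z"
  have r: "0 \<le> r" "r < 1" using z unfolding r_def unit_disc_def by auto
  define t where "t = (1 + r) / (1 - r)"
  have t: "t \<ge> 1" using r unfolding t_def by (simp add: field_simps)
  have Qz: "Q z = of_real t" unfolding Q_def \<rho>z t_def r_def by simp
  have Hz: "H z = c * of_real (ln t)" unfolding H_def Qz using t by (simp add: Ln_of_real)
  have gz: "g z = \<i> * of_real (K * (2 * ln t / pi))"
    unfolding g_def Hz Aff_def c_def by (simp add: complex_eq_iff)
  have "norm (g z) = K * (2 * ln t / pi)"
  proof -
    have "K * (2 * ln t / pi) \<ge> 0" using K t by simp
    then show ?thesis unfolding gz by (simp only: norm_mult norm_of_real norm_ii abs_of_nonneg mult_1)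
  qed
  also have "\<dots> = 4 / pi * K * artanh (norm z)"
    unfolding artanh_def t_def r_def by simp
  finally show ?thesis using gH g0 by blast
qed


theorem theorem7:
  fixes K :: real and f :: "complex \<Rightarrow> complex"
  assumes "K \<ge> 1"
    and "f \<in> HQR K unit_disc strip_S"
    and "f 0 = 0"
  shows "(\<forall>z\<in>unit_disc. norm (f z) \<le> 4 / pi * K * artanh (norm z))
    \<and> (\<forall>z\<in>unit_disc. \<exists>g\<in>HQR K unit_disc strip_S.
          g 0 = 0 \<and> norm (g z) = 4 / pi * K * artanh (norm z))"
  using upper_bound[OF assms(2,3)] sharp[OF assms(1)] by blast

end
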